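(* Let $V$ be a set of $n=2^N$ nodes, let $\mathcal{N}_t$ be an $N$-dimensional hypercube on $V$ at time $t$, and let $\sigma_1,\dots,\sigma_{t-1}$ be the communication requests that occurred before time $t$. Then for every node $u\in V$ there exists a node $v\in V$, $v\neq u$, such that $$d_{Tree}(\mathcal{N}_t,(u,v))\ \ge\ \left\lceil \log_2 T_t(u,v)\right\rceil ,$$ where $T_t(u,v)$ is the working set number of the pair $(u,v)$ at time $t$ (i.e. computed as if $(u,v)$ were the request at time $t$).
   Context: Hypercube networks: $V$ is a set of $n=2^N$ nodes. An $N$-dimensional hypercube on $V$ is a bijection $\mathrm{Coord}:V\to\{0,1\}^N$; two nodes are linked iff their coordinates differ in exactly one bit. $\mathrm{Coord}_i(x)$ is the $i$-th bit. For $0\le d\le N$, the level-$d$ subtree $s^x_d$ of a node $x$ is the set of nodes whose coordinates agree with $\mathrm{Coord}(x)$ in the first $d$ bits (so $s^x_0=V$, $|s^x_d|=2^{N-d}$, $s^x_N=\{x\}$). The level-$d$ complementary subtree $\sim s^x_d$ ($1\le d\le N$) is $s^x_{d-1}\setminus s^x_d$. For nodes $u,v$, $L_{lca}(u,v)$ is the largest $\ell$ such that $u$ and $v$ lie in the same level-$\ell$ subtree (the length of the longest common prefix of their coordinates), and the tree distance is $d_{Tree}(\mathcal{N}_t,(u,v))=N-L_{lca}(u,v)$. Communications: a request sequence $\sigma=(\sigma_1,\dots,\sigma_m)$ with $\sigma_i=(u_i,v_i)\in V\times V$, $u_i\ne v_i$, request $\sigma_i$ occurring at time $i$; the network at time $i$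 is $\mathcal{N}_i$. For times $t'\le t$, the communication graph on $[t',t)$ is the simple undirected graph on vertex set $V$ with an edge $\{a,b\}$ for each request $(a,b)$ made at a time in $[t',t)$; $\mathcal{G}_x(t',t)$ denotes the connected component containing $x$ in it. Working set number $T_t(u,v)$ of a pair $(u,v)$ at time $t$: (i) if $u$ and $v$ communicated before time $t$, let $t'$ be the last such time; then $T_t(u,v)$ is the number of nodes of $\mathcal{G}_u(t',t)$; (ii) otherwise, let $V_u,V_v$ be the vertex sets of $\mathcal{G}_u(0,t)$ and $\mathcal{G}_v(0,t)$; if $v\in V_u$, then $T_t(u,v)=|V_u|$; if $v\notin V_u$, then $T_t(u,v)=\max(2^{d},|V_u|+|V_v|)$ where $d=d_{Tree}(\mathcal{N}_t,(u,v))$. *)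

theory Defs
  imports Complex_Main
begin

text \<open>An N-dimensional hypercube on V: a bijection Coord from V onto the bit strings
  of length N (bit strings as bool lists; bit i is Coord x ! i, the "first d bits"
  are take d).\<close>
definition hypercube :: "'a set \<Rightarrow> nat \<Rightarrow> ('a \<Rightarrow> bool list) \<Rightarrow> bool" where
  "hypercube V N Coord \<longleftrightarrow> bij_betw Coord V {xs. length xs = N}"

definition linked :: "('a \<Rightarrow> bool list) \<Rightarrow> 'a \<Rightarrow> 'a \<Rightarrow> bool" where
  "linked Coord a b \<longleftrightarrow> card {i. i < length (Coord a) \<and> Coord a ! i \<noteq> Coord b ! i} = 1"

definition subtree :: "'a set \<Rightarrow> ('a \<Rightarrow> bool list) \<Rightarrow> 'a \<Rightarrow> nat \<Rightarrow> 'a set" where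
  "subtree V Coord x d = {y \<in> V. take d (Coord y) = take d (Coord x)}"

definition L_lca :: "'a set \<Rightarrow> nat \<Rightarrow> ('a \<Rightarrow> bool list) \<Rightarrow> 'a \<Rightarrow> 'a \<Rightarrow> nat" where
  "L_lca V N Coord u v = (GREATEST l. l \<le> N \<and> v \<in> subtree V Coord u l)"

definition d_Tree :: "'a set \<Rightarrow> nat \<Rightarrow> ('a \<Rightarrow> bool list) \<Rightarrow> 'a \<Rightarrow> 'a \<Rightarrow> nat" where
  "d_Tree V N Coord u v = N - L_lca V N Coord u v"

text \<open>Requests: sigma i is the request at time i (i >= 1). Communication graph on
  [t', t): undirected edges from requests made at times i with t' <= i < t.\<close>
definition comm_edge :: "(nat \<Rightarrow> 'a \<times> 'a) \<Rightarrow> nat \<Rightarrow> nat \<Rightarrow> ('a \<times> 'a) set" where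
  "comm_edge \<sigma> t' t = {(a, b). \<exists>i. 1 \<le> i \<and> t' \<le> i \<and> i < t \<and> (\<sigma> i = (a, b) \<or> \<sigma> i = (b, a))}"

definition comp :: "(nat \<Rightarrow> 'a \<times> 'a) \<Rightarrow> nat \<Rightarrow> nat \<Rightarrow> 'a \<Rightarrow> 'a set" where
  "comp \<sigma> t' t x = {y. (x, y) \<in> (comm_edge \<sigma> t' t)\<^sup>*}"

definition communicated :: "(nat \<Rightarrow> 'a \<times> 'a) \<Rightarrow> nat \<Rightarrow> 'a \<Rightarrow> 'a \<Rightarrow> bool" where
  "communicated \<sigma> t u v \<longleftrightarrow> (\<exists>i. 1 \<le> i \<and> i < t \<and> (\<sigma> i = (u, v) \<or> \<sigma> i = (v, u)))"

definition last_comm :: "(nat \<Rightarrow> 'a \<times> 'a) \<Rightarrow> nat \<Rightarrow> 'a \<Rightarrow> 'a \<Rightarrow> nat" where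
  "last_comm \<sigma> t u v = (GREATEST i. 1 \<le> i \<and> i < t \<and> (\<sigma> i = (u, v) \<or> \<sigma> i = (v, u)))"

definition working_set :: "'a set \<Rightarrow> nat \<Rightarrow> ('a \<Rightarrow> bool list) \<Rightarrow> (nat \<Rightarrow> 'a \<times> 'a) \<Rightarrow> nat \<Rightarrow> 'a \<Rightarrow> 'a \<Rightarrow> nat" where
  "working_set V N Coord \<sigma> t u v =
     (if communicated \<sigma> t u v then card (comp \<sigma> (last_comm \<sigma> t u v) t u)
      else if v \<in> comp \<sigma> 0 t u then card (comp \<sigma> 0 t u)
      else max (2 ^ d_Tree V N Coord u v) (card (comp \<sigma> 0 t u) + card (comp \<sigma> 0 t v)))"

end

theory Submission
  imports Defs
begin

lemma comp_sub:
  assumes "\<And>i. 1 \<le> i \<Longrightarrow> i < t \<Longrightarrow> fst (\<sigma> i) \<in> V \<and> snd (\<sigma> i) \<in> V"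
    and "u \<in> V"
  shows "comp \<sigma> t' t u \<subseteq> V"
proof
  fix y assume "y \<in> comp \<sigma> t' t u"
  hence "(u, y) \<in> (comm_edge \<sigma> t' t)\<^sup>*" by (simp add: comp_def)
  thus "y \<in> V"
  proof (induction rule: rtrancl_induct)
    case base then show ?case using assms(2) .
  next
    case (step y z)
    then obtain i where "1 \<le> i" "i < t" "\<sigma> i = (y, z) \<or> \<sigma> i = (z, y)"
      by (auto simp: comm_edge_def)
    then show ?case using assms(1)[of i] by auto
  qed
qed

lemma comm_sym: "sym (comm_edge \<sigma> t' t)"
  by (auto simp: sym_def comm_edge_def)

lemma comp_disj:
  assumes "v \<notin> comp \<sigma> t' t u"
  shows "comp \<sigma> t' t u \<inter> comp \<sigma> t' t v = {}"
proof (rule ccontr)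
  assume "comp \<sigma> t' t u \<inter> comp \<sigma> t' t v \<noteq> {}"
  then obtain x where x: "(u, x) \<in> (comm_edge \<sigma> t' t)\<^sup>*" "(v, x) \<in> (comm_edge \<sigma> t' t)\<^sup>*"
    by (auto simp: comp_def)
  have "sym ((comm_edge \<sigma> t' t)\<^sup>*)" using comm_sym sym_rtrancl by blast
  hence "(x, v) \<in> (comm_edge \<sigma> t' t)\<^sup>*" using x(2) by (meson symD)
  hence "(u, v) \<in> (comm_edge \<sigma> t' t)\<^sup>*" using x(1) by (meson rtrancl_trans)
  thus False using assms by (simp add: comp_def)
qed

theorem mainTheorem1:
  fixes V :: "'a set" and N :: nat and Coord :: "'a \<Rightarrow> bool list"
    and \<sigma> :: "nat \<Rightarrow> 'a \<times> 'a" and t :: nat and u :: 'a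
  assumes "finite V" and "card V = 2 ^ N" and "N \<ge> 1"
    and "hypercube V N Coord"
    and "\<And>i. 1 \<le> i \<Longrightarrow> i < t \<Longrightarrow> fst (\<sigma> i) \<in> V \<and> snd (\<sigma> i) \<in> V \<and> fst (\<sigma> i) \<noteq> snd (\<sigma> i)"
    and "u \<in> V"
  shows "\<exists>v\<in>V. v \<noteq> u \<and>
           of_int \<lceil>log 2 (real (working_set V N Coord \<sigma> t u v))\<rceil> \<le> real (d_Tree V N Coord u v)"
proof -
  have bij: "bij_betw Coord V {xs. length xs = N}" using assms(4) by (simp add: hypercube_def)
  define xs where "xs = Coord u"
  have lxs: "length xs = N" using bij assms(6) unfolding xs_def bij_betw_def by auto
  define ys where "ys = (\<not> xs ! 0) # tl xs"
  have lys: "length ys = N" using lxs assms(3) by (simp add: ys_def)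
  hence "ys \<in> Coord ` V" using bij unfolding bij_betw_def by simp
  then obtain v where v: "v \<in> V" "Coord v = ys" by (metis imageE)
  have ne: "Coord v ! 0 \<noteq> Coord u ! 0" using v by (simp add: ys_def xs_def)
  hence vu: "v \<noteq> u" by auto
  have L: "L_lca V N Coord u v = 0"
    unfolding L_lca_def
  proof (rule Greatest_equality)
    show "0 \<le> N \<and> v \<in> subtree V Coord u 0" using v by (simp add: subtree_def)
  next
    fix y assume "y \<le> N \<and> v \<in> subtree V Coord u y"
    hence eq: "take y (Coord v) = take y (Coord u)" by (simp add: subtree_def)
    show "y \<le> 0"
    proof (rule ccontr)
      assume "\<not> y \<le> 0"
      hence "take y (Coord v) ! 0 = Coord v ! 0" "take y (Coord u) ! 0 = Coord u ! 0" by auto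
      thus False using eq ne by simp
    qed
  qed
  hence D: "d_Tree V N Coord u v = N" by (simp add: d_Tree_def)
  have sv: "\<And>i. 1 \<le> i \<Longrightarrow> i < t \<Longrightarrow> fst (\<sigma> i) \<in> V \<and> snd (\<sigma> i) \<in> V" using assms(5) by blast
  have W: "working_set V N Coord \<sigma> t u v \<le> 2 ^ N"
  proof (cases "communicated \<sigma> t u v")
    case True
    have "card (comp \<sigma> (last_comm \<sigma> t u v) t u) \<le> card V"
      by (rule card_mono[OF assms(1) comp_sub[OF sv assms(6)]])
    thus ?thesis using True assms(2) by (simp add: working_set_def)
  next
    case F: False
    show ?thesis
    proof (cases "v \<in> comp \<sigma> 0 t u")
      case True
      have "card (comp \<sigma> 0 t u) \<le> card V"
        by (rule card_mono[OF assms(1) comp_sub[OF sv assms(6)]])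
      thus ?thesis using True F assms(2) by (simp add: working_set_def)
    next
      case False
      have s1: "comp \<sigma> 0 t u \<subseteq> V" by (rule comp_sub[OF sv assms(6)])
      have s2: "comp \<sigma> 0 t v \<subseteq> V" by (rule comp_sub[OF sv v(1)])
      have f1: "finite (comp \<sigma> 0 t u)" using s1 assms(1) finite_subset by blast
      have f2: "finite (comp \<sigma> 0 t v)" using s2 assms(1) finite_subset by blast
      have "card (comp \<sigma> 0 t u) + card (comp \<sigma> 0 t v) = card (comp \<sigma> 0 t u \<union> comp \<sigma> 0 t v)"
        using card_Un_disjoint[OF f1 f2 comp_disj[OF False]] by simp
      also have "\<dots> \<le> card V" using s1 s2 assms(1) by (intro card_mono) auto
      finally show ?thesis using False F assms(2) D by (simp add: working_set_def)
    qed
  qed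
  have "log 2 (real (working_set V N Coord \<sigma> t u v)) \<le> real N"
  proof (cases "working_set V N Coord \<sigma> t u v = 0")
    case True then show ?thesis by (simp add: log_def)
  next
    case False
    have "log 2 (real (working_set V N Coord \<sigma> t u v)) \<le> log 2 (2 ^ N)"
      using False W by (subst log_le_cancel_iff) (auto simp flip: of_nat_power)
    also have "\<dots> = real N" by simp
    finally show ?thesis .
  qed
  hence "\<lceil>log 2 (real (working_set V N Coord \<sigma> t u v))\<rceil> \<le> int N"
    by (simp add: ceiling_le_iff)
  thus ?thesis using v vu D by (intro bexI[of _ v]) auto
qed

end
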